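(* Let $R=k[x_1,\dots,x_n]$, $f_1,\dots,f_m\in R$, $I=\langle f_1,\dots,f_m\rangle$, with fixed term orders on $R$ and $R^m$. Let $G$ be a finite set of polynomials in $I$ with $\{f_1^{[\mathbf e_1]},\dots,f_m^{[\mathbf e_m]}\}\subset G$, and let $f^{[\mathbf u]}$ be a polynomial in $I$. Suppose that for every critical pair $(t_g,g^{[\mathbf v]},t_h,h^{[\mathbf w]})$ of elements of $G$ with $\mathrm{lpp}(\mathbf u)\succeq\mathrm{lpp}(t_g\mathbf v)$, the S-polynomial of this critical pair has a standard representation w.r.t. $G$. Then $f^{[\mathbf u]}$ has a standard representation w.r.t. $G$.
   Context: Let $\mathbf f=(f_1,\dots,f_m)$; a polynomial in $I$ is a pair $f^{[\mathbf u]}$ with $\mathbf u\in R^m$ and $f=\mathbf u\cdot\mathbf f$, with operations $f^{[\mathbf u]}+g^{[\mathbf v]}=(f+g)^{[\mathbf u+\mathbf v]}$, $ct(f^{[\mathbf u]})=(ctf)^{[ct\mathbf u]}$. $\mathbf e_i$ is the $i$-th unit vector. $\mathrm{lpp},\mathrm{lc}$ are leading power product and coefficient (both orders denoted $\prec$), with $\mathrm{lpp}(0)=0\prec$ all nonzero power products. Critical pair: for $g^{[\mathbf v]},h^{[\mathbf w]}$ with $g,h\ne0$, $t=\mathrm{lcm}(\mathrm{lpp}(g),\mathrm{lpp}(h))$, $t_g=t/\mathrm{lpp}(g)$, $t_h=t/\mathrm{lpp}(h)$; if $\mathrm{lpp}(t_g\mathbf v)\succeq\mathrm{lpp}(t_h\mathbf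 w)$ then $(t_g,g^{[\mathbf v]},t_h,h^{[\mathbf w]})$ is a critical pair, with S-polynomial $t_g(g^{[\mathbf v]})-c\,t_h(h^{[\mathbf w]})$, $c=\mathrm{lc}(g)/\mathrm{lc}(h)$. A polynomial $f^{[\mathbf u]}$ in $I$ has a standard representation w.r.t. a set $B$ if there are $p_1,\dots,p_s\in R$ and $g_1^{[\mathbf v_1]},\dots,g_s^{[\mathbf v_s]}\in B$ with $f=\sum_i p_ig_i$, $\mathrm{lpp}(f)\succeq\mathrm{lpp}(p_ig_i)$ and $\mathrm{lpp}(\mathbf u)\succeq\mathrm{lpp}(p_i\mathbf v_i)$ for all $i$. *)

theory Defs
  imports Main "HOL-Library.Poly_Mapping"
begin

(* Power products in the variables 'x (finitely many, 'x :: finite) are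
  exponent vectors  'x \<Rightarrow>\<^sub>0 nat  (multiplication = addition of exponents);
  polynomials in R = k[x] are  ('x \<Rightarrow>\<^sub>0 nat) \<Rightarrow>\<^sub>0 'k;
  vectors in R^m are functions  'i \<Rightarrow> poly  with a finite index type 'i, m = CARD('i);
  module terms (power products of R^m) are pairs (t, i) meaning t e_i. *)

type_synonym 'x pp = "'x \<Rightarrow>\<^sub>0 nat"
type_synonym ('x, 'k) mpoly = "'x pp \<Rightarrow>\<^sub>0 'k"
type_synonym ('x, 'k, 'i) mvec = "'i \<Rightarrow> ('x, 'k) mpoly"

definition term_order :: "('x pp \<Rightarrow> 'x pp \<Rightarrow> bool) \<Rightarrow> bool" where
  "term_order ord \<longleftrightarrow>
     (\<forall>s. ord s s) \<and>
     (\<forall>s t. ord s t \<and> ord t s \<longrightarrow> s = t) \<and>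
     (\<forall>s t u. ord s t \<and> ord t u \<longrightarrow> ord s u) \<and>
     (\<forall>s t. ord s t \<or> ord t s) \<and>
     wf {(s, t). ord s t \<and> s \<noteq> t} \<and>
     (\<forall>t. ord 0 t) \<and>
     (\<forall>s t r. ord s t \<longrightarrow> ord (s + r) (t + r))"

definition module_term_order :: "('x pp \<times> 'i \<Rightarrow> 'x pp \<times> 'i \<Rightarrow> bool) \<Rightarrow> bool" where
  "module_term_order ordm \<longleftrightarrow>
     (\<forall>a. ordm a a) \<and>
     (\<forall>a b. ordm a b \<and> ordm b a \<longrightarrow> a = b) \<and>
     (\<forall>a b c. ordm a b \<and> ordm b c \<longrightarrow> ordm a c) \<and>
     (\<forall>a b. ordm a b \<or> ordm b a) \<and>
     wf {(a, b). ordm a b \<and> a \<noteq> b} \<and>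
     (\<forall>t i r. ordm (t, i) (t + r, i)) \<and>
     (\<forall>s i t j r. ordm (s, i) (t, j) \<longrightarrow> ordm (s + r, i) (t + r, j))"

(* Order extended to  option : None plays the role of lpp(0) = 0, which is
  smaller than every nonzero power product. *)
fun opt_le :: "('a \<Rightarrow> 'a \<Rightarrow> bool) \<Rightarrow> 'a option \<Rightarrow> 'a option \<Rightarrow> bool" where
  "opt_le ord None _ = True"
| "opt_le ord (Some a) None = False"
| "opt_le ord (Some a) (Some b) = ord a b"

definition max_elem :: "('a \<Rightarrow> 'a \<Rightarrow> bool) \<Rightarrow> 'a set \<Rightarrow> 'a option" where
  "max_elem ord A = (if A = {} then None else Some (THE a. a \<in> A \<and> (\<forall>b\<in>A. ord b a)))"

definition lpp :: "('x pp \<Rightarrow> 'x pp \<Rightarrow> bool) \<Rightarrow> ('x, 'k::zero) mpoly \<Rightarrow> 'x pp option" where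
  "lpp ord p = max_elem ord (Poly_Mapping.keys p)"

definition lc :: "('x pp \<Rightarrow> 'x pp \<Rightarrow> bool) \<Rightarrow> ('x, 'k::zero) mpoly \<Rightarrow> 'k" where
  "lc ord p = (case lpp ord p of None \<Rightarrow> 0 | Some t \<Rightarrow> Poly_Mapping.lookup p t)"

definition lppv :: "('x pp \<times> 'i \<Rightarrow> 'x pp \<times> 'i \<Rightarrow> bool) \<Rightarrow> ('x, 'k::zero, 'i) mvec
                     \<Rightarrow> ('x pp \<times> 'i) option" where
  "lppv ordm u = max_elem ordm {(t, i). t \<in> Poly_Mapping.keys (u i)}"

definition monom_pp :: "'x pp \<Rightarrow> ('x, 'k::{zero,one}) mpoly" where
  "monom_pp t = Poly_Mapping.single t 1"

definition vscale :: "('x, 'k::comm_ring_1) mpoly \<Rightarrow> ('x, 'k, 'i) mvec \<Rightarrow> ('x, 'k, 'i) mvec" where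
  "vscale p u = (\<lambda>i. p * u i)"

definition unit_vec :: "'i \<Rightarrow> ('x, 'k::comm_ring_1, 'i) mvec" where
  "unit_vec i = (\<lambda>j. if j = i then 1 else 0)"

(* A polynomial in I is a pair f^[u] = (f, u) with f = u \<cdot> F,
  F = (f_1, ..., f_m). *)
definition in_ideal_lab :: "('x, 'k::comm_ring_1, 'i::finite) mvec \<Rightarrow> ('x, 'k) mpoly \<times> ('x, 'k, 'i) mvec \<Rightarrow> bool" where
  "in_ideal_lab F fu \<longleftrightarrow> fst fu = (\<Sum>i\<in>UNIV. snd fu i * F i)"

definition lab_scale :: "('x, 'k::comm_ring_1) mpoly \<Rightarrow> ('x, 'k) mpoly \<times> ('x, 'k, 'i) mvec
                          \<Rightarrow> ('x, 'k) mpoly \<times> ('x, 'k, 'i) mvec" where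
  "lab_scale p fu = (p * fst fu, vscale p (snd fu))"

definition lab_minus :: "('x, 'k::comm_ring_1) mpoly \<times> ('x, 'k, 'i) mvec
                          \<Rightarrow> ('x, 'k) mpoly \<times> ('x, 'k, 'i) mvec
                          \<Rightarrow> ('x, 'k) mpoly \<times> ('x, 'k, 'i) mvec" where
  "lab_minus a b = (fst a - fst b, \<lambda>i. snd a i - snd b i)"

(* lcm of power products (componentwise max of exponents); s + (t - s) is
  computed pointwise with truncated subtraction on nat. *)
definition pp_lcm :: "'x pp \<Rightarrow> 'x pp \<Rightarrow> 'x pp" where
  "pp_lcm s t = s + (t - s)"

definition critical_pair ::
  "('x pp \<Rightarrow> 'x pp \<Rightarrow> bool) \<Rightarrow> ('x pp \<times> 'i \<Rightarrow> 'x pp \<times> 'i \<Rightarrow> bool)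
   \<Rightarrow> (('x, 'k::field) mpoly \<times> ('x, 'k, 'i) mvec) set
   \<Rightarrow> 'x pp \<Rightarrow> ('x, 'k) mpoly \<times> ('x, 'k, 'i) mvec
   \<Rightarrow> 'x pp \<Rightarrow> ('x, 'k) mpoly \<times> ('x, 'k, 'i) mvec \<Rightarrow> bool" where
  "critical_pair ord ordm G tg gv th hw \<longleftrightarrow>
     gv \<in> G \<and> hw \<in> G \<and> fst gv \<noteq> 0 \<and> fst hw \<noteq> 0 \<and>
     (let lg = the (lpp ord (fst gv)); lh = the (lpp ord (fst hw)); t = pp_lcm lg lh in
        tg = t - lg \<and> th = t - lh) \<and>
     opt_le ordm (lppv ordm (vscale (monom_pp th) (snd hw)))
                 (lppv ordm (vscale (monom_pp tg) (snd gv)))"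

definition spoly ::
  "('x pp \<Rightarrow> 'x pp \<Rightarrow> bool) \<Rightarrow> 'x pp \<Rightarrow> ('x, 'k::field) mpoly \<times> ('x, 'k, 'i) mvec
   \<Rightarrow> 'x pp \<Rightarrow> ('x, 'k) mpoly \<times> ('x, 'k, 'i) mvec \<Rightarrow> ('x, 'k) mpoly \<times> ('x, 'k, 'i) mvec" where
  "spoly ord tg gv th hw =
     lab_minus (lab_scale (monom_pp tg) gv)
               (lab_scale (Poly_Mapping.single th (lc ord (fst gv) / lc ord (fst hw))) hw)"

definition std_rep ::
  "('x pp \<Rightarrow> 'x pp \<Rightarrow> bool) \<Rightarrow> ('x pp \<times> 'i \<Rightarrow> 'x pp \<times> 'i \<Rightarrow> bool)
   \<Rightarrow> (('x, 'k::comm_ring_1) mpoly \<times> ('x, 'k, 'i) mvec) set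
   \<Rightarrow> ('x, 'k) mpoly \<times> ('x, 'k, 'i) mvec \<Rightarrow> bool" where
  "std_rep ord ordm B fu \<longleftrightarrow>
     (\<exists>ps :: (('x, 'k) mpoly \<times> (('x, 'k) mpoly \<times> ('x, 'k, 'i) mvec)) list.
        (\<forall>(p, gv) \<in> set ps. gv \<in> B) \<and>
        fst fu = (\<Sum>(p, gv) \<leftarrow> ps. p * fst gv) \<and>
        (\<forall>(p, gv) \<in> set ps.
            opt_le ord (lpp ord (p * fst gv)) (lpp ord (fst fu)) \<and>
            opt_le ordm (lppv ordm (vscale p (snd gv))) (lppv ordm (snd fu))))"

end

theory Submission
  imports Defs "HOL-Library.Multiset"
begin


lemma poly_single_sum:
  "(p::'a \<Rightarrow>\<^sub>0 'b::comm_monoid_add) = (\<Sum>s\<in>Poly_Mapping.keys p. Poly_Mapping.single s (Poly_Mapping.lookup p s))"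
proof (rule poly_mapping_eqI)
  fix k
  have "Poly_Mapping.lookup (\<Sum>s\<in>Poly_Mapping.keys p. Poly_Mapping.single s (Poly_Mapping.lookup p s)) k
      = (\<Sum>s\<in>Poly_Mapping.keys p. (if s = k then Poly_Mapping.lookup p s else 0))"
    by (simp add: lookup_sum lookup_single when_def)
  also have "\<dots> = Poly_Mapping.lookup p k"
    by (simp add: sum.delta' in_keys_iff)
  finally show "Poly_Mapping.lookup p k = Poly_Mapping.lookup (\<Sum>s\<in>Poly_Mapping.keys p. Poly_Mapping.single s (Poly_Mapping.lookup p s)) k" by simp
qed

lemma lookup_single_mult:
  "Poly_Mapping.lookup (Poly_Mapping.single s c * (g::'x pp \<Rightarrow>\<^sub>0 'k::comm_ring_1)) (s + t) = c * Poly_Mapping.lookup g t"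
proof -
  have "Poly_Mapping.lookup (Poly_Mapping.single s c * g) (s + t)
       = (\<Sum>l. (c when s = l) * (\<Sum>q. Poly_Mapping.lookup g q when s + t = l + q))"
    by (simp add: lookup_mult lookup_single)
  also have "\<dots> = (\<Sum>l. (c * (\<Sum>q. Poly_Mapping.lookup g q when s + t = l + q) when s = l))"
    by (simp add: when_mult)
  also have "\<dots> = c * (\<Sum>q. Poly_Mapping.lookup g q when s + t = s + q)" by simp
  also have "(\<Sum>q. Poly_Mapping.lookup g q when s + t = s + q) = (\<Sum>q. Poly_Mapping.lookup g q when t = q)"
    by simp
  finally show ?thesis by simp
qed

lemma lookup_single_mult_not:
  assumes "\<forall>t. k \<noteq> s + t"
  shows "Poly_Mapping.lookup (Poly_Mapping.single s c * (g::'x pp \<Rightarrow>\<^sub>0 'k::comm_ring_1)) k = 0"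
proof -
  have "k \<notin> Poly_Mapping.keys (Poly_Mapping.single s c * g)"
    using keys_mult[of "Poly_Mapping.single s c" g] assms
    by (auto split: if_splits)
  then show ?thesis by (simp add: in_keys_iff)
qed

lemma PK:
  fixes p g :: "('x, 'k::comm_ring_1) mpoly"
  assumes a: "a \<in> Poly_Mapping.keys p" and b: "b \<in> Poly_Mapping.keys g"
    and u: "\<forall>s\<in>Poly_Mapping.keys p. \<forall>t\<in>Poly_Mapping.keys g. s + t = a + b \<longrightarrow> s = a"
  shows "Poly_Mapping.lookup (p * g) (a + b) = Poly_Mapping.lookup p a * Poly_Mapping.lookup g b"
proof -
  have "p * g = (\<Sum>s\<in>Poly_Mapping.keys p. Poly_Mapping.single s (Poly_Mapping.lookup p s) * g)"
    by (subst poly_single_sum[of p]) (simp add: sum_distrib_right)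
  then have "Poly_Mapping.lookup (p * g) (a + b) = (\<Sum>s\<in>Poly_Mapping.keys p. Poly_Mapping.lookup (Poly_Mapping.single s (Poly_Mapping.lookup p s) * g) (a + b))"
    by (simp add: lookup_sum)
  also have "\<dots> = Poly_Mapping.lookup (Poly_Mapping.single a (Poly_Mapping.lookup p a) * g) (a + b)"
  proof -
    have z: "(\<Sum>s\<in>Poly_Mapping.keys p - {a}. Poly_Mapping.lookup (Poly_Mapping.single s (Poly_Mapping.lookup p s) * g) (a + b)) = 0"
    proof (rule sum.neutral, rule ballI)
      fix s assume s: "s \<in> Poly_Mapping.keys p - {a}"
      show "Poly_Mapping.lookup (Poly_Mapping.single s (Poly_Mapping.lookup p s) * g) (a + b) = 0"
      proof (cases "\<exists>t. a + b = s + t")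
        case True
        then obtain t where t: "a + b = s + t" by blast
        have "t \<notin> Poly_Mapping.keys g" using u s t by auto
        then show ?thesis using t lookup_single_mult[of s "Poly_Mapping.lookup p s" g t]
          by (simp add: in_keys_iff)
      next
        case False then show ?thesis by (intro lookup_single_mult_not) auto
      qed
    qed
    show ?thesis using a z by (simp add: sum.remove)
  qed
  also have "\<dots> = Poly_Mapping.lookup p a * Poly_Mapping.lookup g b" by (rule lookup_single_mult)
  finally show ?thesis .
qed

lemma PK_keys:
  fixes p g :: "('x, 'k::field) mpoly"
  assumes "a \<in> Poly_Mapping.keys p" "b \<in> Poly_Mapping.keys g"
    "\<forall>s\<in>Poly_Mapping.keys p. \<forall>t\<in>Poly_Mapping.keys g. s + t = a + b \<longrightarrow> s = a"
  shows "a + b \<in> Poly_Mapping.keys (p * g)"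
  using PK[OF assms] assms(1,2) by (simp add: in_keys_iff)

lemma keys_single_mult:
  fixes g :: "('x, 'k::field) mpoly"
  assumes "c \<noteq> 0"
  shows "Poly_Mapping.keys (Poly_Mapping.single s c * g) = (\<lambda>t. s + t) ` Poly_Mapping.keys g"
proof
  show "Poly_Mapping.keys (Poly_Mapping.single s c * g) \<subseteq> (\<lambda>t. s + t) ` Poly_Mapping.keys g"
    using keys_mult[of "Poly_Mapping.single s c" g] assms by auto
  show "(\<lambda>t. s + t) ` Poly_Mapping.keys g \<subseteq> Poly_Mapping.keys (Poly_Mapping.single s c * g)"
  proof
    fix k assume "k \<in> (\<lambda>t. s + t) ` Poly_Mapping.keys g"
    then obtain t where t: "t \<in> Poly_Mapping.keys g" "k = s + t" by auto
    then show "k \<in> Poly_Mapping.keys (Poly_Mapping.single s c * g)"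
      using lookup_single_mult[of s c g t] assms by (simp add: in_keys_iff)
  qed
qed


lemma max_elem_ex:
  assumes tr: "\<forall>a b c. R a b \<and> R b c \<longrightarrow> R a c" and tot: "\<forall>a b. R a b \<or> R b a"
    and "finite A" "A \<noteq> {}"
  shows "\<exists>a\<in>A. \<forall>b\<in>A. R b a"
  using assms(3,4)
proof (induction A rule: finite_ne_induct)
  case (singleton x) then show ?case using tot by auto
next
  case (insert x F)
  then obtain a where a: "a \<in> F" "\<forall>b\<in>F. R b a" by blast
  show ?case
  proof (cases "R x a")
    case True then show ?thesis using a by auto
  next
    case False then have ax: "R a x" using tot by blast
    have "\<forall>b\<in>F. R b x"
    proof
      fix b assume "b \<in> F"
      then have "R b a" using a by blast
      then show "R b x" using ax tr by blast
    qed
    moreover have "R x x" using tot by blast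
    ultimately show ?thesis by blast
  qed
qed

lemma max_elem_eq:
  assumes as: "\<forall>a b. R a b \<and> R b a \<longrightarrow> a = b" and "a \<in> A" "\<forall>b\<in>A. R b a"
  shows "max_elem R A = Some a"
proof -
  have "(THE a. a \<in> A \<and> (\<forall>b\<in>A. R b a)) = a"
    using assms by (intro the_equality) blast+
  then show ?thesis using assms(2) by (auto simp: max_elem_def)
qed

lemma max_elem_Some:
  assumes "\<forall>a b. R a b \<and> R b a \<longrightarrow> a = b"
    "\<forall>a b c. R a b \<and> R b c \<longrightarrow> R a c" "\<forall>a b. R a b \<or> R b a"
    "finite A" "A \<noteq> {}"
  shows "\<exists>a. max_elem R A = Some a \<and> a \<in> A \<and> (\<forall>b\<in>A. R b a)"
proof -
  obtain a where a: "a \<in> A" "\<forall>b\<in>A. R b a" using max_elem_ex[OF assms(2-5)] by blast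
  have "max_elem R A = Some a" by (rule max_elem_eq[OF assms(1) a])
  then show ?thesis using a by blast
qed

lemma max_elem_empty[simp]: "max_elem R {} = None"
  by (simp add: max_elem_def)

lemma opt_le_trans:
  assumes "\<forall>a b c. R a b \<and> R b c \<longrightarrow> R a c"
  shows "opt_le R x y \<Longrightarrow> opt_le R y z \<Longrightarrow> opt_le R x z"
proof -
  assume xy: "opt_le R x y" and yz: "opt_le R y z"
  show "opt_le R x z"
  proof (cases x)
    case None then show ?thesis by simp
  next
    case (Some a)
    then obtain b where b: "y = Some b" "R a b" using xy by (cases y) auto
    then obtain c where c: "z = Some c" "R b c" using yz by (cases z) auto
    have "R a c" using assms b(2) c(2) by blast
    then show ?thesis using Some c by simp
  qed
qed

definition VK :: "('x, 'k::zero, 'i) mvec \<Rightarrow> ('x pp \<times> 'i) set" where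
  "VK u = {(t, i). t \<in> Poly_Mapping.keys (u i)}"

lemma finite_VK: "finite (VK (u :: ('x, 'k::zero, 'i::finite) mvec))"
proof -
  have "VK u \<subseteq> (\<Union>i. (\<lambda>t. (t, i)) ` Poly_Mapping.keys (u i))" by (auto simp: VK_def)
  moreover have "finite (\<Union>i. (\<lambda>t. (t, i)) ` Poly_Mapping.keys (u i))" by simp
  ultimately show ?thesis by (rule finite_subset)
qed

lemma keys_empty_iff: "Poly_Mapping.keys p = {} \<longleftrightarrow> p = 0"
proof
  assume "Poly_Mapping.keys p = {}"
  then show "p = 0" by (intro poly_mapping_eqI) (simp add: in_keys_iff)
qed simp

locale ords =
  fixes ord :: "'x pp \<Rightarrow> 'x pp \<Rightarrow> bool"
    and ordm :: "'x pp \<times> ('i::finite) \<Rightarrow> 'x pp \<times> 'i \<Rightarrow> bool"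
  assumes TO: "term_order ord" and MO: "module_term_order ordm"
begin

lemmas TOc = TO[unfolded term_order_def]
lemmas MOc = MO[unfolded module_term_order_def]
lemmas TOs = TOc[THEN conjunct1] TOc[THEN conjunct2, THEN conjunct1] TOc[THEN conjunct2, THEN conjunct2, THEN conjunct1] TOc[THEN conjunct2, THEN conjunct2, THEN conjunct2, THEN conjunct1] TOc[THEN conjunct2, THEN conjunct2, THEN conjunct2, THEN conjunct2, THEN conjunct1] TOc[THEN conjunct2, THEN conjunct2, THEN conjunct2, THEN conjunct2, THEN conjunct2, THEN conjunct2]
lemmas MOs = MOc[THEN conjunct1] MOc[THEN conjunct2, THEN conjunct1] MOc[THEN conjunct2, THEN conjunct2, THEN conjunct1] MOc[THEN conjunct2, THEN conjunct2, THEN conjunct2, THEN conjunct1] MOc[THEN conjunct2, THEN conjunct2, THEN conjunct2, THEN conjunct2, THEN conjunct2, THEN conjunct1] MOc[THEN conjunct2, THEN conjunct2, THEN conjunct2, THEN conjunct2, THEN conjunct2, THEN conjunct2]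

lemma o_refl: "ord s s" using TOs(1) by blast
lemma o_antisym: "ord s t \<Longrightarrow> ord t s \<Longrightarrow> s = t" using TOs(2) by blast
lemma o_trans: "ord s t \<Longrightarrow> ord t u \<Longrightarrow> ord s u" using TOs(3) by blast
lemma o_total: "ord s t \<or> ord t s" using TOs(4) by blast
lemma o_wf: "wf {(s, t). ord s t \<and> s \<noteq> t}" using TOs(5) .
lemma o_add: "ord s t \<Longrightarrow> ord (r + s) (r + t)"
  using TOs(6)[rule_format, of s t r] by (simp add: add.commute)

lemma m_refl: "ordm a a" using MOs(1) by blast
lemma m_antisym: "ordm a b \<Longrightarrow> ordm b a \<Longrightarrow> a = b" using MOs(2) by blast
lemma m_trans: "ordm a b \<Longrightarrow> ordm b c \<Longrightarrow> ordm a c" using MOs(3) by blast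
lemma m_total: "ordm a b \<or> ordm b a" using MOs(4) by blast
lemma m_mono: "ordm (t, i) (r + t, i)" using MOs(5)[rule_format, of t i r] by (simp add: add.commute)
lemma m_add: "ordm (s, i) (t, j) \<Longrightarrow> ordm (r + s, i) (r + t, j)"
  using MOs(6)[rule_format, of s i t j r] by (simp add: add.commute)

lemma m_cancel: "ordm (r + s, i) (r + t, j) \<Longrightarrow> ordm (s, i) (t, j)"
proof -
  assume h: "ordm (r + s, i) (r + t, j)"
  show "ordm (s, i) (t, j)"
  proof (rule ccontr)
    assume "\<not> ordm (s, i) (t, j)"
    then have "ordm (t, j) (s, i)" using m_total by blast
    then have "ordm (r + t, j) (r + s, i)" by (rule m_add)
    then have "(r + t, j) = (r + s, i)" using h m_antisym by blast
    then have "(t, j) = (s, i)" by simp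
    then show False using \<open>\<not> ordm (s, i) (t, j)\<close> m_refl by simp
  qed
qed

lemma o_props: "\<forall>a b. ord a b \<and> ord b a \<longrightarrow> a = b" "\<forall>a b c. ord a b \<and> ord b c \<longrightarrow> ord a c"
  "\<forall>a b. ord a b \<or> ord b a"
  using TOs(2-4) .

lemma m_props: "\<forall>a b. ordm a b \<and> ordm b a \<longrightarrow> a = b" "\<forall>a b c. ordm a b \<and> ordm b c \<longrightarrow> ordm a c"
  "\<forall>a b. ordm a b \<or> ordm b a"
  using MOs(2-4) .

lemma lpp_None: "lpp ord p = None \<longleftrightarrow> p = 0"
proof (cases "p = 0")
  case True then show ?thesis by (simp add: lpp_def)
next
  case False
  then have "Poly_Mapping.keys p \<noteq> {}" by (simp add: keys_empty_iff)
  then obtain a where "lpp ord p = Some a"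
    using max_elem_Some[OF o_props finite_keys] unfolding lpp_def by blast
  then show ?thesis using False by simp
qed

lemma lpp_Some:
  assumes "p \<noteq> 0"
  shows "\<exists>a. lpp ord p = Some a \<and> a \<in> Poly_Mapping.keys p \<and> (\<forall>b\<in>Poly_Mapping.keys p. ord b a)"
  using max_elem_Some[OF o_props, of "Poly_Mapping.keys p"] assms
  by (auto simp: lpp_def keys_empty_iff)

lemma lpp_eqI: "a \<in> Poly_Mapping.keys p \<Longrightarrow> \<forall>b\<in>Poly_Mapping.keys p. ord b a \<Longrightarrow> lpp ord p = Some a"
  unfolding lpp_def using max_elem_eq[OF o_props(1)] by blast

lemma lpp_le: "opt_le ord (lpp ord p) (Some X) \<longleftrightarrow> (\<forall>k\<in>Poly_Mapping.keys p. ord k X)"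
proof (cases "p = 0")
  case True then have "lpp ord p = None" by (simp add: lpp_def)
  then show ?thesis using True by simp
next
  case False
  then obtain a where a: "lpp ord p = Some a" "a \<in> Poly_Mapping.keys p" "\<forall>b\<in>Poly_Mapping.keys p. ord b a"
    using lpp_Some by blast
  have "ord a X \<longleftrightarrow> (\<forall>k\<in>Poly_Mapping.keys p. ord k X)"
  proof
    assume aX: "ord a X"
    show "\<forall>k\<in>Poly_Mapping.keys p. ord k X"
    proof
      fix k assume "k \<in> Poly_Mapping.keys p"
      then have "ord k a" using a(3) by blast
      then show "ord k X" using aX by (rule o_trans)
    qed
  qed (use a(2) in blast)
  then show ?thesis using a(1) by simp
qed

lemma lppv_None: "lppv ordm u = None \<longleftrightarrow> VK u = {}"
proof (cases "VK u = {}")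
  case True then show ?thesis by (simp add: lppv_def VK_def[symmetric])
next
  case False
  then obtain a where "lppv ordm u = Some a"
    using max_elem_Some[OF m_props finite_VK] unfolding lppv_def VK_def[symmetric] by blast
  then show ?thesis using False by simp
qed

lemma lppv_Some:
  assumes "VK u \<noteq> {}"
  shows "\<exists>a. lppv ordm u = Some a \<and> a \<in> VK u \<and> (\<forall>b\<in>VK u. ordm b a)"
  using max_elem_Some[OF m_props finite_VK, of u] assms
  by (auto simp: lppv_def VK_def[symmetric])

lemma lppv_eqI: "a \<in> VK u \<Longrightarrow> \<forall>b\<in>VK u. ordm b a \<Longrightarrow> lppv ordm u = Some a"
  unfolding lppv_def VK_def[symmetric] using max_elem_eq[OF m_props(1)] by blast

lemma lppv_le: "opt_le ordm (lppv ordm u) (Some X) \<longleftrightarrow> (\<forall>k\<in>VK u. ordm k X)"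
proof (cases "VK u = {}")
  case True then have "lppv ordm u = None" by (simp add: lppv_def VK_def[symmetric])
  then show ?thesis using True by simp
next
  case False
  then obtain a where a: "lppv ordm u = Some a" "a \<in> VK u" "\<forall>b\<in>VK u. ordm b a"
    using lppv_Some by blast
  have "ordm a X \<longleftrightarrow> (\<forall>k\<in>VK u. ordm k X)"
  proof
    assume aX: "ordm a X"
    show "\<forall>k\<in>VK u. ordm k X"
    proof
      fix k assume "k \<in> VK u"
      then have "ordm k a" using a(3) by blast
      then show "ordm k X" using aX by (rule m_trans)
    qed
  qed (use a(2) in blast)
  then show ?thesis using a(1) by simp
qed

lemma lppv_in: "lppv ordm u = Some a \<Longrightarrow> k \<in> VK u \<Longrightarrow> ordm k a"
  using lppv_le[of u a] m_refl by auto

lemma lpp_in: "lpp ord p = Some a \<Longrightarrow> k \<in> Poly_Mapping.keys p \<Longrightarrow> ord k a"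
  using lpp_le[of p a] o_refl by auto

lemma opt_trans: "opt_le ord x y \<Longrightarrow> opt_le ord y z \<Longrightarrow> opt_le ord x z"
  using opt_le_trans[OF o_props(2)] .

lemma optm_trans: "opt_le ordm x y \<Longrightarrow> opt_le ordm y z \<Longrightarrow> opt_le ordm x z"
  using opt_le_trans[OF m_props(2)] .

lemma lpp_shift:
  fixes g :: "('x, 'k::field) mpoly"
  assumes "c \<noteq> 0" "g \<noteq> 0"
  shows "lpp ord (Poly_Mapping.single s c * g) = Some (s + the (lpp ord g))"
proof -
  obtain a where a: "lpp ord g = Some a" "a \<in> Poly_Mapping.keys g" "\<forall>b\<in>Poly_Mapping.keys g. ord b a"
    using lpp_Some assms(2) by blast
  show ?thesis using a o_add by (intro lpp_eqI) (auto simp: keys_single_mult[OF assms(1)])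
qed

lemma VK_shift:
  fixes v :: "('x, 'k::field, 'i) mvec"
  assumes "c \<noteq> 0"
  shows "VK (vscale (Poly_Mapping.single s c) v) = (\<lambda>(t, i). (s + t, i)) ` VK v"
  by (auto simp: VK_def vscale_def keys_single_mult[OF assms])

lemma lppv_shift:
  fixes v :: "('x, 'k::field, 'i) mvec"
  assumes "c \<noteq> 0"
  shows "lppv ordm (vscale (Poly_Mapping.single s c) v) = map_option (\<lambda>(t, i). (s + t, i)) (lppv ordm v)"
proof (cases "VK v = {}")
  case True
  then have "VK (vscale (Poly_Mapping.single s c) v) = {}" using VK_shift[OF assms] by simp
  then show ?thesis using True by (simp add: lppv_def VK_def[symmetric])
next
  case False
  then obtain t0 i0 where a: "lppv ordm v = Some (t0, i0)" "(t0, i0) \<in> VK v" "\<forall>b\<in>VK v. ordm b (t0, i0)"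
    using lppv_Some by fastforce
  have "lppv ordm (vscale (Poly_Mapping.single s c) v) = Some (s + t0, i0)"
    using a m_add by (intro lppv_eqI) (auto simp: VK_shift[OF assms])
  then show ?thesis using a by simp
qed

lemma lpp_mult_ge:
  fixes p g :: "('x, 'k::field) mpoly"
  assumes r: "r \<in> Poly_Mapping.keys p" and g: "g \<noteq> 0"
    and le: "opt_le ord (lpp ord (p * g)) (Some X)"
  shows "ord (r + the (lpp ord g)) X"
proof -
  have p: "p \<noteq> 0" using r by auto
  obtain a where a: "lpp ord p = Some a" "a \<in> Poly_Mapping.keys p" "\<forall>b\<in>Poly_Mapping.keys p. ord b a"
    using lpp_Some p by blast
  obtain b where b: "lpp ord g = Some b" "b \<in> Poly_Mapping.keys g" "\<forall>c\<in>Poly_Mapping.keys g. ord c b"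
    using lpp_Some g by blast
  have u: "\<forall>s\<in>Poly_Mapping.keys p. \<forall>t\<in>Poly_Mapping.keys g. s + t = a + b \<longrightarrow> s = a"
  proof (intro ballI impI)
    fix s t assume st: "s \<in> Poly_Mapping.keys p" "t \<in> Poly_Mapping.keys g" "s + t = a + b"
    have 1: "ord (s + t) (s + b)" using o_add b st by blast
    have 2: "ord (b + s) (b + a)" using o_add a st by blast
    have "s + b = a + b" using 1 2 st(3) o_antisym by (simp add: add.commute)
    then show "s = a" by simp
  qed
  have "a + b \<in> Poly_Mapping.keys (p * g)" by (rule PK_keys[OF a(2) b(2) u])
  then have "ord (a + b) X" using le lpp_le by blast
  moreover have "ord (b + r) (b + a)" using o_add a r by blast
  ultimately have "ord (b + r) X" by (metis o_trans add.commute)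
  then show ?thesis using b by (simp add: add.commute)
qed

lemma lppv_mult_ge:
  fixes q :: "('x, 'k::field) mpoly" and v :: "('x, 'k, 'i) mvec"
  assumes r: "r \<in> Poly_Mapping.keys q" and v: "lppv ordm v = Some (t0, i0)"
    and le: "opt_le ordm (lppv ordm (vscale q v)) (Some X)"
  shows "ordm (r + t0, i0) X"
proof -
  have "VK v \<noteq> {}" using v by (auto simp: lppv_def VK_def[symmetric])
  then obtain a0 where "lppv ordm v = Some a0" "a0 \<in> VK v" "\<forall>b\<in>VK v. ordm b a0"
    using lppv_Some by blast
  then have t0: "(t0, i0) \<in> VK v" "\<forall>b\<in>VK v. ordm b (t0, i0)"
    using v by auto
  obtain a where a: "a \<in> Poly_Mapping.keys q" "\<forall>s\<in>Poly_Mapping.keys q. ordm (s + t0, i0) (a + t0, i0)"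
  proof -
    have "q \<noteq> 0" using r by auto
    then show ?thesis using that max_elem_ex[OF m_props(2,3), of "(\<lambda>s. (s + t0, i0)) ` Poly_Mapping.keys q"]
      by (auto simp: keys_empty_iff)
  qed
  have u: "\<forall>s\<in>Poly_Mapping.keys q. \<forall>t\<in>Poly_Mapping.keys (v i0). s + t = a + t0 \<longrightarrow> s = a"
  proof (intro ballI impI)
    fix s t assume st: "s \<in> Poly_Mapping.keys q" "t \<in> Poly_Mapping.keys (v i0)" "s + t = a + t0"
    have tt: "ordm (t, i0) (t0, i0)" using t0(2) st(2) by (auto simp: VK_def)
    have 1: "ordm (s + t, i0) (s + t0, i0)" by (rule m_add[OF tt])
    have 2: "ordm (s + t0, i0) (a + t0, i0)" using a st by blast
    have "(s + t0, i0) = (a + t0, i0)" using 1 2 st(3) m_antisym by metis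
    then show "s = a" by simp
  qed
  have "a + t0 \<in> Poly_Mapping.keys (q * v i0)"
    by (rule PK_keys[OF a(1) _ u]) (use t0 in \<open>auto simp: VK_def\<close>)
  then have "(a + t0, i0) \<in> VK (vscale q v)" by (simp add: VK_def vscale_def)
  then have "ordm (a + t0, i0) X" using le lppv_le by blast
  moreover have "ordm (r + t0, i0) (a + t0, i0)" using a r by blast
  ultimately show ?thesis using m_trans by blast
qed

end



definition trm :: "'k \<times> 'x pp \<times> (('x, 'k::comm_ring_1) mpoly \<times> ('x, 'k, 'i) mvec) \<Rightarrow> ('x, 'k) mpoly" where
  "trm e = Poly_Mapping.single (fst (snd e)) (fst e) * fst (snd (snd e))"

definition ltE :: "('x pp \<Rightarrow> 'x pp \<Rightarrow> bool) \<Rightarrow> 'k \<times> 'x pp \<times> (('x, 'k::comm_ring_1) mpoly \<times> ('x, 'k, 'i) mvec) \<Rightarrow> 'x pp" where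
  "ltE ord e = fst (snd e) + the (lpp ord (fst (snd (snd e))))"

definition okE where
  "okE ordm G U e \<longleftrightarrow> fst e \<noteq> 0 \<and> fst (snd (snd e)) \<noteq> 0 \<and> snd (snd e) \<in> G \<and>
     opt_le ordm (lppv ordm (vscale (Poly_Mapping.single (fst (snd e)) (fst e)) (snd (snd (snd e))))) U"

definition sumR where "sumR R = sum_mset (image_mset trm R)"

lemma sumR_plus[simp]: "sumR (A + B) = sumR A + sumR B" by (simp add: sumR_def)
lemma sumR_empty[simp]: "sumR {#} = 0" by (simp add: sumR_def)
lemma sumR_add_mset[simp]: "sumR (add_mset e M) = trm e + sumR M" by (simp add: sumR_def)
lemma sumR_single[simp]: "sumR {#e#} = trm e" by (simp add: sumR_def)
lemma sumR_list: "sumR (sum_list Ms) = sum_list (map sumR Ms)"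
  by (induction Ms) auto

lemma keys_diff_gen: "Poly_Mapping.keys ((a::'a \<Rightarrow>\<^sub>0 'b::ab_group_add) - b) \<subseteq> Poly_Mapping.keys a \<union> Poly_Mapping.keys b"
  by (auto simp: in_keys_iff lookup_minus)

locale main = ords ord ordm for ord :: "'x pp \<Rightarrow> 'x pp \<Rightarrow> bool"
    and ordm :: "'x pp \<times> ('i::finite) \<Rightarrow> 'x pp \<times> 'i \<Rightarrow> bool" +
  fixes F :: "('x, 'k::field, 'i) mvec"
    and G :: "(('x, 'k) mpoly \<times> ('x, 'k, 'i) mvec) set"
    and fu :: "('x, 'k) mpoly \<times> ('x, 'k, 'i) mvec"
  assumes GI: "\<forall>gv\<in>G. in_ideal_lab F gv"
    and FG: "\<forall>i. (F i, unit_vec i) \<in> G"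
    and fuI: "in_ideal_lab F fu"
    and crit: "\<forall>tg gv th hw. critical_pair ord ordm G tg gv th hw \<and>
           opt_le ordm (lppv ordm (vscale (monom_pp tg) (snd gv))) (lppv ordm (snd fu))
           \<longrightarrow> std_rep ord ordm G (spoly ord tg gv th hw)"
begin

abbreviation "U \<equiv> lppv ordm (snd fu)"
abbreviation "ok \<equiv> okE ordm G U"
abbreviation "lt \<equiv> ltE ord"

lemma ok_lpp: "ok e \<Longrightarrow> lpp ord (trm e) = Some (lt e)"
  unfolding okE_def trm_def ltE_def by (intro lpp_shift) auto

lemma ok_keys: "ok e \<Longrightarrow> k \<in> Poly_Mapping.keys (trm e) \<Longrightarrow> ord k (lt e)"
  using ok_lpp lpp_in by blast

lemma ok_lookup: "ok e \<Longrightarrow> Poly_Mapping.lookup (trm e) (lt e) \<noteq> 0"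
proof -
  assume "ok e"
  then have "lpp ord (trm e) = Some (lt e)" by (rule ok_lpp)
  then have "lt e \<in> Poly_Mapping.keys (trm e)"
    using lpp_Some[of "trm e"] lpp_None[of "trm e"] by (cases "trm e = 0") auto
  then show ?thesis by (simp add: in_keys_iff)
qed

lemma G_lab_nonzero:
  assumes "gv \<in> G" "fst gv \<noteq> 0"
  shows "VK (snd gv) \<noteq> {}"
proof
  assume "VK (snd gv) = {}"
  have "\<forall>i. snd gv i = 0"
  proof
    fix i
    have "Poly_Mapping.keys (snd gv i) = {}" using \<open>VK (snd gv) = {}\<close> unfolding VK_def by blast
    then show "snd gv i = 0" using keys_empty_iff by blast
  qed
  then have "fst gv = 0" using GI assms(1) by (simp add: in_ideal_lab_def)
  then show False using assms(2) by simp
qed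

lemma FIN:
  assumes okR: "\<forall>e\<in>#R. ok e" and sR: "sumR R = fst fu"
    and le: "\<forall>e\<in>#R. opt_le ord (Some (lt e)) (lpp ord (fst fu))"
  shows "std_rep ord ordm G fu"
proof -
  obtain xs where xs: "mset xs = R" using ex_mset by blast
  define ps where "ps = map (\<lambda>e. (Poly_Mapping.single (fst (snd e)) (fst e), snd (snd e))) xs"
  have 1: "\<forall>(p, gv)\<in>set ps. gv \<in> G"
  proof
    fix x assume "x \<in> set ps"
    then obtain e where e: "e \<in># R" "x = (Poly_Mapping.single (fst (snd e)) (fst e), snd (snd e))"
      using xs by (auto simp: ps_def)
    have "ok e" using okR e(1) by blast
    then have "snd (snd e) \<in> G" by (simp add: okE_def)
    then show "case x of (p, gv) \<Rightarrow> gv \<in> G" using e(2) by simp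
  qed
  have "(\<Sum>(p, gv)\<leftarrow>ps. p * fst gv) = sum_list (map trm xs)"
    unfolding ps_def trm_def by (simp add: o_def case_prod_beta)
  also have "\<dots> = sumR R" unfolding sumR_def xs[symmetric]
    by (induction xs) auto
  finally have 2: "fst fu = (\<Sum>(p, gv)\<leftarrow>ps. p * fst gv)" using sR by simp
  have 3: "\<forall>(p, gv)\<in>set ps. opt_le ord (lpp ord (p * fst gv)) (lpp ord (fst fu)) \<and>
            opt_le ordm (lppv ordm (vscale p (snd gv))) (lppv ordm (snd fu))"
  proof
    fix x assume "x \<in> set ps"
    then obtain e where e: "e \<in># R" "x = (Poly_Mapping.single (fst (snd e)) (fst e), snd (snd e))"
      using xs by (auto simp: ps_def)
    have oke: "ok e" using okR e(1) by blast
    have A: "lpp ord (fst x * fst (snd x)) = Some (lt e)"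
      using ok_lpp[OF oke] e(2) by (simp add: trm_def)
    have B: "opt_le ord (Some (lt e)) (lpp ord (fst fu))" using le e(1) by blast
    have C: "opt_le ordm (lppv ordm (vscale (fst x) (snd (snd x)))) (lppv ordm (snd fu))"
      using oke e(2) by (simp add: okE_def)
    show "case x of (p, gv) \<Rightarrow> opt_le ord (lpp ord (p * fst gv)) (lpp ord (fst fu)) \<and>
            opt_le ordm (lppv ordm (vscale p (snd gv))) (lppv ordm (snd fu))"
      using A B C by (simp add: case_prod_beta)
  qed
  show ?thesis unfolding std_rep_def using 1 2 3 by blast
qed


lemma mult_key:
  fixes p g :: "('x, 'k) mpoly"
  assumes "p \<noteq> 0" "g \<noteq> 0"
  shows "the (lpp ord p) + the (lpp ord g) \<in> Poly_Mapping.keys (p * g)"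
proof -
  obtain a where a: "lpp ord p = Some a" "a \<in> Poly_Mapping.keys p" "\<forall>b\<in>Poly_Mapping.keys p. ord b a"
    using lpp_Some assms(1) by blast
  obtain b where b: "lpp ord g = Some b" "b \<in> Poly_Mapping.keys g" "\<forall>c\<in>Poly_Mapping.keys g. ord c b"
    using lpp_Some assms(2) by blast
  have u: "\<forall>s\<in>Poly_Mapping.keys p. \<forall>t\<in>Poly_Mapping.keys g. s + t = a + b \<longrightarrow> s = a"
  proof (intro ballI impI)
    fix s t assume st: "s \<in> Poly_Mapping.keys p" "t \<in> Poly_Mapping.keys g" "s + t = a + b"
    have 1: "ord (s + t) (s + b)" using o_add b st by blast
    have 2: "ord (b + s) (b + a)" using o_add a st by blast
    have "s + b = a + b" using 1 2 st(3) o_antisym by (simp add: add.commute)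
    then show "s = a" by simp
  qed
  show ?thesis using PK_keys[OF a(2) b(2) u] a b by simp
qed

lemma mult_nz: "(p::('x, 'k) mpoly) \<noteq> 0 \<Longrightarrow> g \<noteq> 0 \<Longrightarrow> p * g \<noteq> 0"
  using mult_key by fastforce

lemma lc_lookup: "lpp ord g = Some a \<Longrightarrow> lc ord g = Poly_Mapping.lookup g a"
  by (simp add: lc_def)

lemma pp_arith:
  fixes sj lj sk lk :: "'x pp"
  assumes "sj + lj = sk + lk"
  defines "L \<equiv> pp_lcm lj lk"
  shows "(sj + lj - L) + (L - lj) = sj" "(sj + lj - L) + (L - lk) = sk"
    "(sj + lj - L) + L = sj + lj" "(L - lj) + lj = L" "(L - lk) + lk = L"
proof -
  have h: "\<And>x. Poly_Mapping.lookup sj x + Poly_Mapping.lookup lj x = Poly_Mapping.lookup sk x + Poly_Mapping.lookup lk x"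
    using assms(1) by (metis lookup_add)
  have L: "\<And>x. Poly_Mapping.lookup L x = Poly_Mapping.lookup lj x + (Poly_Mapping.lookup lk x - Poly_Mapping.lookup lj x)"
    by (simp add: L_def pp_lcm_def lookup_add lookup_minus)
  show "(sj + lj - L) + (L - lj) = sj"
  proof (rule poly_mapping_eqI)
    fix x show "Poly_Mapping.lookup ((sj + lj - L) + (L - lj)) x = Poly_Mapping.lookup (sj) x"
      unfolding lookup_add lookup_minus L using h[of x] by arith
  qed
  show "(sj + lj - L) + (L - lk) = sk"
  proof (rule poly_mapping_eqI)
    fix x show "Poly_Mapping.lookup ((sj + lj - L) + (L - lk)) x = Poly_Mapping.lookup (sk) x"
      unfolding lookup_add lookup_minus L using h[of x] by arith
  qed
  show "(sj + lj - L) + L = sj + lj"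
  proof (rule poly_mapping_eqI)
    fix x show "Poly_Mapping.lookup ((sj + lj - L) + L) x = Poly_Mapping.lookup (sj + lj) x"
      unfolding lookup_add lookup_minus L using h[of x] by arith
  qed
  show "(L - lj) + lj = L"
  proof (rule poly_mapping_eqI)
    fix x show "Poly_Mapping.lookup ((L - lj) + lj) x = Poly_Mapping.lookup (L) x"
      unfolding lookup_add lookup_minus L using h[of x] by arith
  qed
  show "(L - lk) + lk = L"
  proof (rule poly_mapping_eqI)
    fix x show "Poly_Mapping.lookup ((L - lk) + lk) x = Poly_Mapping.lookup (L) x"
      unfolding lookup_add lookup_minus L using h[of x] by arith
  qed
qed

lemma STEP:
  assumes okR: "\<forall>e\<in>#R. ok e" and sR: "sumR R = fst fu" and ltT: "\<forall>e\<in>#R. ord (lt e) T"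
    and RR: "R = R0 + {#(cj, sj, gj, vj), (ck, sk, gk, vk)#}"
    and tj: "lt (cj, sj, gj, vj) = T" and tk: "lt (ck, sk, gk, vk) = T"
    and orient: "opt_le ordm (lppv ordm (vscale (Poly_Mapping.single sk ck) vk))
                            (lppv ordm (vscale (Poly_Mapping.single sj cj) vj))"
  shows "\<exists>R'. (\<forall>e\<in>#R'. ok e) \<and> sumR R' = fst fu \<and> (\<forall>e\<in>#R'. ord (lt e) T) \<and>
           size (filter_mset (\<lambda>e. lt e = T) R') < size (filter_mset (\<lambda>e. lt e = T) R)"
proof -
  have okj: "ok (cj, sj, gj, vj)" and okk: "ok (ck, sk, gk, vk)" using okR RR by auto
  then have cj: "cj \<noteq> 0" and gj: "gj \<noteq> 0" "(gj, vj) \<in> G"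
    and labj: "opt_le ordm (lppv ordm (vscale (Poly_Mapping.single sj cj) vj)) U"
    and ck: "ck \<noteq> 0" and gk: "gk \<noteq> 0" "(gk, vk) \<in> G"
    and labk: "opt_le ordm (lppv ordm (vscale (Poly_Mapping.single sk ck) vk)) U"
    by (auto simp: okE_def)
  obtain lj where lj: "lpp ord gj = Some lj" "lj \<in> Poly_Mapping.keys gj" "\<forall>b\<in>Poly_Mapping.keys gj. ord b lj"
    using lpp_Some gj(1) by blast
  obtain lk where lk: "lpp ord gk = Some lk" "lk \<in> Poly_Mapping.keys gk" "\<forall>b\<in>Poly_Mapping.keys gk. ord b lk"
    using lpp_Some gk(1) by blast
  have Tj: "sj + lj = T" using tj lj by (simp add: ltE_def)
  have Tk: "sk + lk = T" using tk lk by (simp add: ltE_def)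
  define L where "L = pp_lcm lj lk"
  define tg where "tg = L - lj"
  define th where "th = L - lk"
  define s where "s = T - L"
  define d where "d = lc ord gj / lc ord gk"
  have lcj: "lc ord gj = Poly_Mapping.lookup gj lj" "lc ord gj \<noteq> 0"
    using lc_lookup[OF lj(1)] lj(2) by (auto simp: in_keys_iff)
  have lck: "lc ord gk = Poly_Mapping.lookup gk lk" "lc ord gk \<noteq> 0"
    using lc_lookup[OF lk(1)] lk(2) by (auto simp: in_keys_iff)
  have d0: "d \<noteq> 0" using lcj lck by (simp add: d_def)
  have eqjk: "sj + lj = sk + lk" using Tj Tk by simp
  have s_tg: "s + tg = sj" and s_th: "s + th = sk" and s_L: "s + L = T"
    and tg_lj: "tg + lj = L" and th_lk: "th + lk = L"
    using pp_arith[OF eqjk] Tj unfolding s_def tg_def th_def L_def by auto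
  obtain bj ij where vj: "lppv ordm vj = Some (bj, ij)"
    using G_lab_nonzero[of "(gj, vj)"] gj lppv_Some by fastforce
  obtain ak ik where vk: "lppv ordm vk = Some (ak, ik)"
    using G_lab_nonzero[of "(gk, vk)"] gk lppv_Some by fastforce
  obtain W where W: "U = Some W" "ordm (sj + bj, ij) W"
    using labj vj lppv_shift[OF cj, of sj vj] by (cases U) auto
  have ori: "ordm (sk + ak, ik) (sj + bj, ij)"
    using orient vj vk lppv_shift[OF cj, of sj vj] lppv_shift[OF ck, of sk vk] by simp
  have ori2: "ordm (th + ak, ik) (tg + bj, ij)"
    using ori unfolding s_tg[symmetric] s_th[symmetric] add.assoc by (rule m_cancel)
  have cp: "critical_pair ord ordm G tg (gj, vj) th (gk, vk)"
    unfolding critical_pair_def Let_def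
    using gj gk lj lk ori2 vj vk lppv_shift[of 1 th vk] lppv_shift[of 1 tg vj]
    by (simp add: tg_def th_def L_def monom_pp_def)
  have cond: "opt_le ordm (lppv ordm (vscale (monom_pp tg) (snd (gj, vj)))) (lppv ordm (snd fu))"
  proof -
    have "ordm (tg + bj, ij) (s + (tg + bj), ij)" by (rule m_mono)
    then have "ordm (tg + bj, ij) W" using W(2) s_tg by (metis add.assoc m_trans)
    then show ?thesis using W vj lppv_shift[of 1 tg vj] by (simp add: monom_pp_def)
  qed
  have "std_rep ord ordm G (spoly ord tg (gj, vj) th (gk, vk))"
    using crit cp cond by blast
  then obtain ps where
    ps1: "\<forall>(q, hv) \<in> set ps. hv \<in> G" and
    ps2: "fst (spoly ord tg (gj, vj) th (gk, vk)) = (\<Sum>(q, hv) \<leftarrow> ps. q * fst hv)" and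
    ps3: "\<forall>(q, hv) \<in> set ps.
            opt_le ord (lpp ord (q * fst hv)) (lpp ord (fst (spoly ord tg (gj, vj) th (gk, vk)))) \<and>
            opt_le ordm (lppv ordm (vscale q (snd hv))) (lppv ordm (snd (spoly ord tg (gj, vj) th (gk, vk))))"
    unfolding std_rep_def by blast
  define S where "S = spoly ord tg (gj, vj) th (gk, vk)"
  have S1: "fst S = Poly_Mapping.single tg 1 * gj - Poly_Mapping.single th d * gk"
    by (simp add: S_def spoly_def lab_minus_def lab_scale_def monom_pp_def d_def)
  have S2: "snd S = (\<lambda>i. Poly_Mapping.single tg 1 * vj i - Poly_Mapping.single th d * vk i)"
    by (simp add: S_def spoly_def lab_minus_def lab_scale_def monom_pp_def d_def vscale_def)
  have SL: "Poly_Mapping.lookup (fst S) L = 0"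
  proof -
    have 1: "Poly_Mapping.lookup (Poly_Mapping.single tg 1 * gj) L = lc ord gj"
      using lookup_single_mult[of tg 1 gj lj] tg_lj lcj by simp
    have 2: "Poly_Mapping.lookup (Poly_Mapping.single th d * gk) L = d * lc ord gk"
      using lookup_single_mult[of th d gk lk] th_lk lck by simp
    show ?thesis using 1 2 lck(2) by (simp add: S1 lookup_minus d_def)
  qed
  have SK: "\<forall>k\<in>Poly_Mapping.keys (fst S). ord k L \<and> k \<noteq> L"
  proof
    fix k assume k: "k \<in> Poly_Mapping.keys (fst S)"
    then have "k \<in> Poly_Mapping.keys (Poly_Mapping.single tg 1 * gj) \<union> Poly_Mapping.keys (Poly_Mapping.single th d * gk)"
      using keys_diff_gen[of "Poly_Mapping.single tg 1 * gj" "Poly_Mapping.single th d * gk"] k unfolding S1 by blast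
    then have "ord k L"
    proof
      assume "k \<in> Poly_Mapping.keys (Poly_Mapping.single tg 1 * gj)"
      then obtain t where t: "t \<in> Poly_Mapping.keys gj" "k = tg + t"
        using keys_single_mult[of 1 tg gj] by auto
      have "ord (tg + t) (tg + lj)" using lj(3) t(1) o_add by blast
      then show "ord k L" using t tg_lj by simp
    next
      assume "k \<in> Poly_Mapping.keys (Poly_Mapping.single th d * gk)"
      then obtain t where t: "t \<in> Poly_Mapping.keys gk" "k = th + t"
        using keys_single_mult[OF d0, of th gk] by auto
      have "ord (th + t) (th + lk)" using lk(3) t(1) o_add by blast
      then show "ord k L" using t th_lk by simp
    qed
    moreover have "k \<noteq> L" using k SL by (auto simp: in_keys_iff)
    ultimately show "ord k L \<and> k \<noteq> L" by blast
  qed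
  have SV: "opt_le ordm (lppv ordm (snd S)) (Some (tg + bj, ij))"
    unfolding lppv_le
  proof
    fix kk assume kk: "kk \<in> VK (snd S)"
    obtain x i where xi: "kk = (x, i)" by (cases kk)
    have "x \<in> Poly_Mapping.keys (Poly_Mapping.single tg 1 * vj i - Poly_Mapping.single th d * vk i)"
      using kk xi S2 by (simp add: VK_def)
    then have "x \<in> Poly_Mapping.keys (Poly_Mapping.single tg 1 * vj i) \<union> Poly_Mapping.keys (Poly_Mapping.single th d * vk i)"
      using keys_diff_gen[of "Poly_Mapping.single tg 1 * vj i" "Poly_Mapping.single th d * vk i"] by blast
    then have "ordm (x, i) (tg + bj, ij)"
    proof
      assume "x \<in> Poly_Mapping.keys (Poly_Mapping.single tg 1 * vj i)"
      then obtain t where t: "t \<in> Poly_Mapping.keys (vj i)" "x = tg + t"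
        using keys_single_mult[of 1 tg "vj i"] by auto
      have "ordm (t, i) (bj, ij)" using lppv_in[OF vj] t(1) by (simp add: VK_def)
      then show "ordm (x, i) (tg + bj, ij)" using t(2) m_add by blast
    next
      assume "x \<in> Poly_Mapping.keys (Poly_Mapping.single th d * vk i)"
      then obtain t where t: "t \<in> Poly_Mapping.keys (vk i)" "x = th + t"
        using keys_single_mult[OF d0, of th "vk i"] by auto
      have "ordm (t, i) (ak, ik)" using lppv_in[OF vk] t(1) by (simp add: VK_def)
      then have "ordm (x, i) (th + ak, ik)" using t(2) m_add by blast
      then show "ordm (x, i) (tg + bj, ij)" using ori2 by (rule m_trans)
    qed
    then show "ordm kk (tg + bj, ij)" using xi by simp
  qed
  note ps2' = ps2[folded S_def] and ps3' = ps3[folded S_def]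
  define Mf where "Mf = (\<lambda>x::('x, 'k) mpoly \<times> (('x, 'k) mpoly \<times> ('x, 'k, 'i) mvec).
     if fst (snd x) = 0 then {#} else image_mset (\<lambda>r. (cj * Poly_Mapping.lookup (fst x) r, s + r, snd x)) (mset_set (Poly_Mapping.keys (fst x))))"
  define N where "N = sum_list (map Mf ps)"
  define c' where "c' = ck + cj * d"
  define K where "K = (if c' = 0 then {#} else {#(c', sk, gk, vk)#})"
  have N_mem: "\<exists>q hv r. (q, hv) \<in> set ps \<and> fst hv \<noteq> 0 \<and> r \<in> Poly_Mapping.keys q \<and>
                 e = (cj * Poly_Mapping.lookup q r, s + r, hv)" if "e \<in># N" for e
  proof -
    have "e \<in> (\<Union>x\<in>set (map Mf ps). set_mset x)" using that unfolding N_def set_mset_sum_list .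
    then obtain q hv where xx: "(q, hv) \<in> set ps" "e \<in># Mf (q, hv)" by auto
    then have "fst hv \<noteq> 0" "\<exists>r\<in>Poly_Mapping.keys q. e = (cj * Poly_Mapping.lookup q r, s + r, hv)"
      by (auto simp: Mf_def split: if_splits)
    then show ?thesis using xx(1) by blast
  qed
  have N_entry: "ok (cj * Poly_Mapping.lookup q r, s + r, hv) \<and>
      ord (lt (cj * Poly_Mapping.lookup q r, s + r, hv)) T \<and> lt (cj * Poly_Mapping.lookup q r, s + r, hv) \<noteq> T"
    if qh: "(q, hv) \<in> set ps" and h0: "fst hv \<noteq> 0" and r: "r \<in> Poly_Mapping.keys q" for q hv r
  proof -
    have hvG: "hv \<in> G" using ps1 qh by auto
    have P1: "opt_le ord (lpp ord (q * fst hv)) (lpp ord (fst S))" using ps3' qh by auto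
    have P2: "opt_le ordm (lppv ordm (vscale q (snd hv))) (lppv ordm (snd S))" using ps3' qh by auto
    have q0: "q \<noteq> 0" using r by auto
    have "q * fst hv \<noteq> 0" using mult_nz[OF q0 h0] .
    then obtain P where P: "lpp ord (q * fst hv) = Some P" using lpp_None by fastforce
    obtain M where M: "lpp ord (fst S) = Some M" using P1 P by (cases "lpp ord (fst S)") auto
    have PM: "ord P M" using P1 P M by simp
    have "fst S \<noteq> 0"
    proof
      assume "fst S = 0"
      then have "lpp ord (fst S) = None" by (simp add: lpp_def)
      then show False using M by simp
    qed
    then have Mk: "M \<in> Poly_Mapping.keys (fst S)" using lpp_Some M by fastforce
    have rl: "ord (r + the (lpp ord (fst hv))) M"
      using lpp_mult_ge[OF r h0, of M] P PM by simp
    have hML: "ord M L" "M \<noteq> L" using SK Mk by auto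
    have rL: "ord (r + the (lpp ord (fst hv))) L" using rl hML(1) by (rule o_trans)
    have rL2: "r + the (lpp ord (fst hv)) \<noteq> L"
    proof
      assume "r + the (lpp ord (fst hv)) = L"
      then have "ord L M" using rl by simp
      then show False using hML o_antisym by blast
    qed
    have lte: "lt (cj * Poly_Mapping.lookup q r, s + r, hv) = s + (r + the (lpp ord (fst hv)))"
      by (simp add: ltE_def add.assoc)
    have A: "ord (lt (cj * Poly_Mapping.lookup q r, s + r, hv)) T"
      unfolding lte s_L[symmetric] using rL by (rule o_add)
    have B: "lt (cj * Poly_Mapping.lookup q r, s + r, hv) \<noteq> T"
      unfolding lte s_L[symmetric] using rL2 by simp
    obtain t0 i0 where hv: "lppv ordm (snd hv) = Some (t0, i0)"
      using G_lab_nonzero[OF hvG h0] lppv_Some by fastforce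
    have "opt_le ordm (lppv ordm (vscale q (snd hv))) (Some (tg + bj, ij))"
      using P2 SV by (rule optm_trans)
    then have "ordm (r + t0, i0) (tg + bj, ij)" by (rule lppv_mult_ge[OF r hv])
    then have "ordm (s + (r + t0), i0) (s + (tg + bj), ij)" by (rule m_add)
    moreover have "s + (tg + bj) = sj + bj" using s_tg by (simp add: add.assoc[symmetric])
    moreover have "s + (r + t0) = s + r + t0" by (simp add: add.assoc)
    ultimately have "ordm (s + r + t0, i0) (sj + bj, ij)" by simp
    then have lab: "ordm (s + r + t0, i0) W" using W(2) by (rule m_trans)
    have c0: "cj * Poly_Mapping.lookup q r \<noteq> 0" using cj r by (simp add: in_keys_iff)
    have "ok (cj * Poly_Mapping.lookup q r, s + r, hv)"
      unfolding okE_def using c0 h0 hvG lab W(1) lppv_shift[OF c0, of "s + r" "snd hv"] hv by simp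
    then show ?thesis using A B by blast
  qed
  have Mf_sum: "sumR (Mf x) = Poly_Mapping.single s cj * (fst x * fst (snd x))" for x
  proof (cases "fst (snd x) = 0")
    case True then show ?thesis by (simp add: Mf_def)
  next
    case False
    have "sumR (Mf x) = (\<Sum>r\<in>Poly_Mapping.keys (fst x). trm (cj * Poly_Mapping.lookup (fst x) r, s + r, snd x))"
      using False by (simp add: Mf_def sumR_def sum_unfold_sum_mset image_mset.compositionality o_def)
    also have "\<dots> = (\<Sum>r\<in>Poly_Mapping.keys (fst x). (Poly_Mapping.single s cj * Poly_Mapping.single r (Poly_Mapping.lookup (fst x) r)) * fst (snd x))"
      by (simp add: trm_def mult_single)
    also have "\<dots> = Poly_Mapping.single s cj * ((\<Sum>r\<in>Poly_Mapping.keys (fst x). Poly_Mapping.single r (Poly_Mapping.lookup (fst x) r)) * fst (snd x))"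
      by (simp add: sum_distrib_left sum_distrib_right mult.assoc)
    also have "\<dots> = Poly_Mapping.single s cj * (fst x * fst (snd x))"
      using poly_single_sum[of "fst x"] by simp
    finally show ?thesis .
  qed
  have N_sum: "sumR N = Poly_Mapping.single s cj * fst S"
  proof -
    have "sumR N = sum_list (map (\<lambda>x. Poly_Mapping.single s cj * (fst x * fst (snd x))) ps)"
      by (simp add: N_def sumR_list o_def Mf_sum)
    also have "\<dots> = Poly_Mapping.single s cj * sum_list (map (\<lambda>x. fst x * fst (snd x)) ps)"
      by (simp add: sum_list_const_mult)
    also have "sum_list (map (\<lambda>x. fst x * fst (snd x)) ps) = fst S"
    proof -
      have "(\<lambda>x::('x, 'k) mpoly \<times> (('x, 'k) mpoly \<times> ('x, 'k, 'i) mvec). fst x * fst (snd x)) = (\<lambda>(q, hv). q * fst hv)"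
        by (simp add: fun_eq_iff)
      then show ?thesis using ps2' by simp
    qed
    finally show ?thesis .
  qed
  have SS: "Poly_Mapping.single s cj * fst S = Poly_Mapping.single sj cj * gj - Poly_Mapping.single sk (cj * d) * gk"
    unfolding S1 right_diff_distrib mult.assoc[symmetric] mult_single s_tg s_th by simp
  have K_sum: "sumR K = Poly_Mapping.single sk (ck + cj * d) * gk"
    by (simp add: K_def c'_def trm_def)
  define R' where "R' = R0 + K + N"
  have sum': "sumR R' = fst fu"
  proof -
    have "sumR R = sumR R0 + Poly_Mapping.single sj cj * gj + Poly_Mapping.single sk ck * gk"
      using RR by (simp add: trm_def algebra_simps)
    moreover have "sumR R' = sumR R0 + Poly_Mapping.single sk (ck + cj * d) * gk +
        (Poly_Mapping.single sj cj * gj - Poly_Mapping.single sk (cj * d) * gk)"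
      by (simp add: R'_def K_sum N_sum SS)
    ultimately show ?thesis using sR by (simp add: single_add algebra_simps)
  qed
  have okK: "\<forall>e\<in>#K. ok e \<and> lt e = T"
  proof (cases "c' = 0")
    case True then show ?thesis by (simp add: K_def)
  next
    case False
    have "lppv ordm (vscale (Poly_Mapping.single sk c') vk) = lppv ordm (vscale (Poly_Mapping.single sk ck) vk)"
      using lppv_shift[OF False, of sk vk] lppv_shift[OF ck, of sk vk] by simp
    then have "ok (c', sk, gk, vk)" using False gk labk by (simp add: okE_def)
    moreover have "lt (c', sk, gk, vk) = T" using tk by (simp add: ltE_def)
    ultimately show ?thesis using False by (simp add: K_def)
  qed
  have ok': "\<forall>e\<in>#R'. ok e"
  proof
    fix e assume "e \<in># R'"
    then consider "e \<in># R0" | "e \<in># K" | "e \<in># N" by (auto simp: R'_def)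
    then show "ok e"
    proof cases
      case 1 then show ?thesis using okR RR by auto
    next
      case 2 then show ?thesis using okK by blast
    next
      case 3 then show ?thesis using N_mem N_entry by blast
    qed
  qed
  have lt': "\<forall>e\<in>#R'. ord (lt e) T"
  proof
    fix e assume "e \<in># R'"
    then consider "e \<in># R0" | "e \<in># K" | "e \<in># N" by (auto simp: R'_def)
    then show "ord (lt e) T"
    proof cases
      case 1 then show ?thesis using ltT RR by auto
    next
      case 2 then show ?thesis using okK o_refl by auto
    next
      case 3 then show ?thesis using N_mem N_entry by blast
    qed
  qed
  have fN: "filter_mset (\<lambda>e. lt e = T) N = {#}"
  proof -
    have "\<forall>e. e \<in># N \<longrightarrow> lt e \<noteq> T"
    proof (intro allI impI)
      fix e assume "e \<in># N"
      then obtain q hv r where "(q, hv) \<in> set ps" "fst hv \<noteq> 0" "r \<in> Poly_Mapping.keys q"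
        "e = (cj * Poly_Mapping.lookup q r, s + r, hv)" using N_mem by blast
      then show "lt e \<noteq> T" using N_entry by blast
    qed
    then show ?thesis by simp
  qed
  have sK: "size (filter_mset (\<lambda>e. lt e = T) K) \<le> 1"
    by (simp add: K_def)
  have cnt: "size (filter_mset (\<lambda>e. lt e = T) R') < size (filter_mset (\<lambda>e. lt e = T) R)"
  proof -
    show ?thesis using sK tj tk RR by (simp add: R'_def fN del: filter_mset_eq_mempty_iff)
  qed
  show ?thesis using ok' sum' lt' cnt by blast
qed

lemma opt_le_total: "opt_le ordm x y \<or> opt_le ordm y x"
  using m_total by (cases x; cases y) auto

lemma lookup_sumR: "Poly_Mapping.lookup (sumR M) k = sum_mset (image_mset (\<lambda>e. Poly_Mapping.lookup (trm e) k) M)"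
  by (induction M) (auto simp: lookup_add)

lemma CORE:
  "\<forall>R. (\<forall>e\<in>#R. ok e) \<and> sumR R = fst fu \<and> (\<forall>e\<in>#R. ord (lt e) T) \<longrightarrow> std_rep ord ordm G fu"
proof (induction T rule: wf_induct[OF o_wf])
  case (1 T)
  have IH: "\<And>T' R. ord T' T \<Longrightarrow> T' \<noteq> T \<Longrightarrow> (\<forall>e\<in>#R. ok e) \<Longrightarrow> sumR R = fst fu \<Longrightarrow>
      (\<forall>e\<in>#R. ord (lt e) T') \<Longrightarrow> std_rep ord ordm G fu"
    using 1 by blast
  have inner: "\<forall>R. (\<forall>e\<in>#R. ok e) \<and> sumR R = fst fu \<and> (\<forall>e\<in>#R. ord (lt e) T) \<and>
      size (filter_mset (\<lambda>e. lt e = T) R) = n \<longrightarrow> std_rep ord ordm G fu" for n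
  proof (induction n rule: less_induct)
    case (less n)
    show ?case
    proof (intro allI impI, elim conjE)
      fix R assume okR: "\<forall>e\<in>#R. ok e" and sR: "sumR R = fst fu" and ltT: "\<forall>e\<in>#R. ord (lt e) T"
        and nR: "size (filter_mset (\<lambda>e. lt e = T) R) = n"
      define RT where "RT = filter_mset (\<lambda>e. lt e = T) R"
      define RN where "RN = filter_mset (\<lambda>e. \<not> lt e = T) R"
      show "std_rep ord ordm G fu"
      proof (cases "Poly_Mapping.lookup (fst fu) T = 0")
        case False
        then have "T \<in> Poly_Mapping.keys (fst fu)" by (simp add: in_keys_iff)
        then obtain La where La: "lpp ord (fst fu) = Some La" "ord T La"
          using lpp_Some[of "fst fu"] by fastforce
        have "\<forall>e\<in>#R. opt_le ord (Some (lt e)) (lpp ord (fst fu))"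
        proof
          fix e assume "e \<in># R"
          then have "ord (lt e) T" using ltT by blast
          then have "ord (lt e) La" using La(2) by (rule o_trans)
          then show "opt_le ord (Some (lt e)) (lpp ord (fst fu))" using La(1) by simp
        qed
        then show ?thesis using FIN okR sR by blast
      next
        case True
        have RRs: "R = RT + RN" unfolding RT_def RN_def by (rule multiset_partition)
        have "Poly_Mapping.lookup (sumR RN) T = 0"
        proof -
          have "\<forall>e\<in>#RN. Poly_Mapping.lookup (trm e) T = 0"
          proof
            fix e assume e: "e \<in># RN"
            then have oke: "ok e" and le: "ord (lt e) T" and ne: "lt e \<noteq> T"
              using okR ltT by (auto simp: RN_def)
            show "Poly_Mapping.lookup (trm e) T = 0"
            proof (rule ccontr)
              assume "Poly_Mapping.lookup (trm e) T \<noteq> 0"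
              then have "T \<in> Poly_Mapping.keys (trm e)" by (simp add: in_keys_iff)
              then have "ord T (lt e)" using ok_keys[OF oke] by blast
              then show False using le ne o_antisym by blast
            qed
          qed
          then show ?thesis unfolding lookup_sumR by (simp add: sum_mset.neutral)
        qed
        moreover have "sumR RT + sumR RN = fst fu" using sR RRs by simp
        ultimately have LT: "Poly_Mapping.lookup (sumR RT) T = 0"
          using True by (metis add.right_neutral lookup_add)
        have allT: "\<forall>e\<in>#RT. lt e = T" by (simp add: RT_def)
        consider "RT = {#}" | e where "RT = {#e#}" | ej ek M0 where "RT = add_mset ej (add_mset ek M0)"
        proof -
          consider "RT = {#}" | e where "RT = {#e#}" | ej ek M0 where "RT = add_mset ej (add_mset ek M0)"
          proof (cases "RT = {#}")
            case False
            then obtain ej where ej: "ej \<in># RT" by blast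
            define M1 where "M1 = RT - {#ej#}"
            have RT1: "RT = add_mset ej M1" using ej by (simp add: M1_def)
            show ?thesis
            proof (cases "M1 = {#}")
              case True then show ?thesis using RT1 that(2) by blast
            next
              case False
              then obtain ek where ek: "ek \<in># M1" by blast
              have "M1 = add_mset ek (M1 - {#ek#})" using ek by simp
              then show ?thesis using RT1 that(3) by metis
            qed
          qed blast
          then show ?thesis using that by blast
        qed
        then show ?thesis
        proof cases
          case 1
          show ?thesis
          proof (cases "R = {#}")
            case True
            then show ?thesis using FIN[of R] okR sR by simp
          next
            case False
            obtain Tm where Tm: "Tm \<in> lt ` set_mset R" "\<forall>b\<in>lt ` set_mset R. ord b Tm"
            proof -
              have "lt ` set_mset R \<noteq> {}" using False by simp
              then show ?thesis using that max_elem_ex[OF o_props(2,3), of "lt ` set_mset R"] by blast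
            qed
            obtain e0 where e0: "e0 \<in># R" "Tm = lt e0" using Tm(1) by blast
            have "ord (lt e0) T" using ltT e0(1) by blast
            then have "ord Tm T" using e0(2) by simp
            moreover have "Tm \<noteq> T"
            proof
              assume "Tm = T"
              then have "e0 \<in># RT" using e0 by (simp add: RT_def)
              then show False using 1 by simp
            qed
            moreover have "\<forall>e\<in>#R. ord (lt e) Tm" using Tm(2) by blast
            ultimately show ?thesis by (rule IH[OF _ _ okR sR])
          qed
        next
          case 2
          have "e \<in># RT" using 2 by simp
          then have eR: "e \<in># R" and eT: "lt e = T" by (simp_all add: RT_def)
          have "ok e" using okR eR by blast
          then have "Poly_Mapping.lookup (trm e) (lt e) \<noteq> 0" by (rule ok_lookup)
          then have "Poly_Mapping.lookup (trm e) T \<noteq> 0" using eT by simp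
          then show ?thesis using LT 2 by simp
        next
          case 3
          have ltj: "lt ej = T" and ltk: "lt ek = T" using 3 allT by auto
          have s1: "{#ej, ek#} \<subseteq># RT" using 3 by simp
          have s2: "RT \<subseteq># R" using RRs by simp
          have sub: "{#ej, ek#} \<subseteq># R" using s1 s2 by (rule subset_mset.order_trans)
          define R0 where "R0 = R - {#ej, ek#}"
          have RR: "R = R0 + {#ej, ek#}" unfolding R0_def by (rule subset_mset.diff_add[OF sub, symmetric])
          obtain cj sj gj vj where ej: "ej = (cj, sj, gj, vj)" by (metis prod.collapse)
          obtain ck sk gk vk where ek: "ek = (ck, sk, gk, vk)" by (metis prod.collapse)
          have "\<exists>R'. (\<forall>e\<in>#R'. ok e) \<and> sumR R' = fst fu \<and> (\<forall>e\<in>#R'. ord (lt e) T) \<and>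
             size (filter_mset (\<lambda>e. lt e = T) R') < size (filter_mset (\<lambda>e. lt e = T) R)"
          proof (cases "opt_le ordm (lppv ordm (vscale (Poly_Mapping.single sk ck) vk))
                            (lppv ordm (vscale (Poly_Mapping.single sj cj) vj))")
            case True
            show ?thesis by (rule STEP[OF okR sR ltT _ _ _ True]) (use RR ej ek ltj ltk in auto)
          next
            case False
            then have or2: "opt_le ordm (lppv ordm (vscale (Poly_Mapping.single sj cj) vj))
                            (lppv ordm (vscale (Poly_Mapping.single sk ck) vk))"
              using opt_le_total by blast
            have RR2: "R = R0 + {#(ck, sk, gk, vk), (cj, sj, gj, vj)#}" using RR ej ek by simp
            show ?thesis by (rule STEP[OF okR sR ltT RR2 _ _ or2]) (use ej ek ltj ltk in auto)
          qed
          then obtain R' where R': "\<forall>e\<in>#R'. ok e" "sumR R' = fst fu" "\<forall>e\<in>#R'. ord (lt e) T"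
            "size (filter_mset (\<lambda>e. lt e = T) R') < n" using nR by blast
          then show ?thesis using less by blast
        qed
      qed
    qed
  qed
  show ?case using inner by blast
qed

lemma sumR_sum: "sumR (\<Sum>i\<in>A. M i) = (\<Sum>i\<in>A. sumR (M i))"
  by (induction A rule: infinite_finite_induct) auto

lemma VK_unit: "VK (unit_vec i :: ('x, 'k, 'i) mvec) = {(0, i)}"
  by (auto simp: VK_def unit_vec_def split: if_splits)

lemma INIT: "\<exists>R. (\<forall>e\<in>#R. ok e) \<and> sumR R = fst fu"
proof -
  define u where "u = snd fu"
  define Mi where "Mi = (\<lambda>i. if F i = 0 then {#} else
     image_mset (\<lambda>r. (Poly_Mapping.lookup (u i) r, r, (F i, unit_vec i :: ('x, 'k, 'i) mvec))) (mset_set (Poly_Mapping.keys (u i))))"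
  define R where "R = (\<Sum>i\<in>UNIV. Mi i)"
  have lu: "lppv ordm (unit_vec i :: ('x, 'k, 'i) mvec) = Some (0, i)" for i
    by (rule lppv_eqI) (auto simp: VK_unit m_refl)
  have ok: "\<forall>e\<in>#R. ok e"
  proof
    fix e assume "e \<in># R"
    then obtain i where "e \<in># Mi i" by (auto simp: R_def set_mset_sum)
    then obtain r where r: "F i \<noteq> 0" "r \<in> Poly_Mapping.keys (u i)"
      "e = (Poly_Mapping.lookup (u i) r, r, (F i, unit_vec i))"
      by (auto simp: Mi_def split: if_splits)
    have c0: "Poly_Mapping.lookup (u i) r \<noteq> 0" using r(2) by (simp add: in_keys_iff)
    have "(r, i) \<in> VK u" using r(2) by (simp add: VK_def)
    then obtain W where W: "lppv ordm u = Some W" "(r, i) \<in> VK u"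
      using lppv_Some by blast
    then have "ordm (r, i) W" using lppv_in by blast
    then show "ok e"
      unfolding okE_def using r c0 FG W lu lppv_shift[OF c0, of r "unit_vec i"] by (simp add: u_def)
  qed
  have "sumR (Mi i) = u i * F i" for i
  proof (cases "F i = 0")
    case True then show ?thesis by (simp add: Mi_def)
  next
    case False
    have "sumR (Mi i) = (\<Sum>r\<in>Poly_Mapping.keys (u i). Poly_Mapping.single r (Poly_Mapping.lookup (u i) r) * F i)"
      using False by (simp add: Mi_def sumR_def sum_unfold_sum_mset image_mset.compositionality o_def trm_def)
    also have "\<dots> = u i * F i"
      by (subst (2) poly_single_sum) (simp add: sum_distrib_right)
    finally show ?thesis .
  qed
  then have "sumR R = fst fu" using fuI by (simp add: R_def sumR_sum in_ideal_lab_def u_def)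
  then show ?thesis using ok by blast
qed

lemma MAIN: "std_rep ord ordm G fu"
proof -
  obtain R where R: "\<forall>e\<in>#R. ok e" "sumR R = fst fu" using INIT by blast
  show ?thesis
  proof (cases "R = {#}")
    case True then show ?thesis using FIN[of R] R by simp
  next
    case False
    then have "lt ` set_mset R \<noteq> {}" by simp
    then obtain Tm where "Tm \<in> lt ` set_mset R" "\<forall>b\<in>lt ` set_mset R. ord b Tm"
      using max_elem_ex[OF o_props(2,3), of "lt ` set_mset R"] by blast
    then have "\<forall>e\<in>#R. ord (lt e) Tm" by blast
    then show ?thesis using CORE[of Tm] R by blast
  qed
qed
end

theorem lemma5p1:
  fixes ord :: "('x::finite) pp \<Rightarrow> 'x pp \<Rightarrow> bool"
    and ordm :: "'x pp \<times> ('i::finite) \<Rightarrow> 'x pp \<times> 'i \<Rightarrow> bool"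
    and F :: "('x, 'k::field, 'i) mvec"
    and G :: "(('x, 'k) mpoly \<times> ('x, 'k, 'i) mvec) set"
    and fu :: "('x, 'k) mpoly \<times> ('x, 'k, 'i) mvec"
  assumes "term_order ord"
    and "module_term_order ordm"
    and "finite G"
    and "\<forall>gv\<in>G. in_ideal_lab F gv"
    and "\<forall>i. (F i, unit_vec i) \<in> G"
    and "in_ideal_lab F fu"
    and "\<forall>tg gv th hw. critical_pair ord ordm G tg gv th hw \<and>
           opt_le ordm (lppv ordm (vscale (monom_pp tg) (snd gv))) (lppv ordm (snd fu))
           \<longrightarrow> std_rep ord ordm G (spoly ord tg gv th hw)"
  shows "std_rep ord ordm G fu"
proof -
  interpret main ord ordm F G fu
    using assms by (unfold_locales) auto
  show ?thesis by (rule MAIN)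
qed

end
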